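(* Let $m=(m_0,\dots,m_s)$ be a vector of odd integers $\ge 3$ and $A=\bigoplus_{\ell=0}^s\mathbb{Z}_{m_\ell}$. Define the matrix $\overline{S}$, with rows and columns indexed by $A\times A$ (with $(0,0)$ as the first index), whose entry in row $(\tilde k,\tilde\kappa)$ and column $(k,\kappa)$ is \[ s_{(k,\kappa),(\tilde k,\tilde\kappa)}=-\prod_{\ell=0}^s\zeta_{m_\ell}^{2^{-1}(\kappa_\ell\tilde k_\ell-\tilde\kappa_\ell k_\ell)}\] when $(\tilde k,\tilde\kappa)$, $(k,\kappa)$ and $(0,0)$ are pairwise distinct, and $s_{(k,\kappa),(\tilde k,\tilde\kappa)}=1-\delta_{(k,\kappa),(\tilde k,\tilde\kappa)}$ otherwise. Then $\overline{S}$ is a normalized signature matrix of the Gabor–Steiner ETF $\mathcal{G}(m)$.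
   Context: Let $|m|=\prod_\ell m_\ell$, and for each $\ell$ fix a primitive $m_\ell$-th root of unity $\zeta_{m_\ell}$; in exponents, $2^{-1}$ denotes the inverse of $2$ modulo $m_\ell$ (well defined since $m_\ell$ is odd). Let $T_{m_\ell}$ be the $m_\ell\times m_\ell$ circulant matrix with first row $(0,1,0,\dots,0)$ and $M_{m_\ell}=\mathrm{diag}(1,\zeta_{m_\ell},\dots,\zeta_{m_\ell}^{m_\ell-1})$. For $k,\kappa\in A$ put $T^{(k)}=\bigotimes_{\ell=0}^sT_{m_\ell}^{k_\ell}$ and $M^{(\kappa)}=\bigotimes_{\ell=0}^sM_{m_\ell}^{\kappa_\ell}$ (Kronecker products), and $\pi(k,\kappa)=I_{(|m|-1)/2}\otimes(M^{(\kappa)}T^{(k)})$. Index the coordinates of $\mathbb{C}^{|m|}$ by $A$ in lexicographic order (representatives $0,\dots,m_\ell-1$). Let $\mathcal{I}$ be the set of the first $(|m|-1)/2$ elements of $A$ in lexicographic order. For $i\in\mathcal{I}$ let $\phi_i\in\mathbb{C}^{|m|}$ have entry $1$ at index $j=i$, entry $-1$ at index $j=-i-\mathbb{1}$ (computed in $A$, where $\mathbb{1}=(1,\dots,1)\in A$), and $0$ elsewhere. Let $\psi\in\mathbb{C}^{|m|(|m|-1)/2}$ be the vector obtained by stacking the $\phi_i$, $i\in\mathcal{I}$, vertically in lexicographic order. The Gabor–Steiner ETF is $\mathcal{G}(m)=\{\varphi_{k,\kappa}:=\pi(k,\kappa)\psi:(k,\kappa)\in A\times A\}$; it is known that these $|m|^2$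 vectors all have the same norm $\nu$ and pairwise inner products of the same absolute value $\alpha>0$ (they form an equiangular tight frame up to scaling). For such a family $\Phi=\{\varphi_x\}_{x\in X}$, its signature matrix is $S=(\Phi^*\Phi-\nu^2I)/\alpha$, where $(\Phi^*\Phi)_{x,y}=\varphi_x^*\varphi_y$. A normalized signature matrix of $\Phi$ is the signature matrix of a switching-equivalent family $\{c_x\varphi_x\}_{x\in X}$ with unimodular scalars $c_x$, in which all off-diagonal entries of the first row and first column are equal to $1$. *)

theory Defs
  imports "HOL-Analysis.Analysis"
begin

(* The group A = Z_{m_0} (+) ... (+) Z_{m_s}: elements are lists k of length |m|
   with 0 <= k!l < m!l (canonical representatives 0..m_l-1). *)
definition GA :: "nat list \<Rightarrow> nat list set" where
  "GA m = {k. length k = length m \<and> (\<forall>l<length m. k ! l < m ! l)}"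

definition ga_zero :: "nat list \<Rightarrow> nat list" where
  "ga_zero m = replicate (length m) 0"

definition ga_neg_minus_one :: "nat list \<Rightarrow> nat list \<Rightarrow> nat list" where
  "ga_neg_minus_one m i = map (\<lambda>l. (2 * (m ! l) - i ! l - 1) mod (m ! l)) [0..<length m]"

definition absm :: "nat list \<Rightarrow> nat" where
  "absm m = prod_list m"

definition Iset :: "nat list \<Rightarrow> nat list set" where
  "Iset m = {i \<in> GA m. card {j \<in> GA m. lexordp (<) j i} < (absm m - 1) div 2}"

definition phi_vec :: "nat list \<Rightarrow> nat list \<Rightarrow> nat list \<Rightarrow> complex" where
  "phi_vec m i j = (if j = i then 1 else if j = ga_neg_minus_one m i then -1 else 0)"

(* n x n matrices as functions on indices 0..n-1 *)
definition circ_shift :: "nat \<Rightarrow> nat \<Rightarrow> nat \<Rightarrow> complex" where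
  "circ_shift n i j = (if j = (i + 1) mod n then 1 else 0)"

definition mod_diag :: "complex \<Rightarrow> nat \<Rightarrow> nat \<Rightarrow> nat \<Rightarrow> complex" where
  "mod_diag z n i j = (if i = j then z ^ i else 0)"

definition sq_mult :: "nat \<Rightarrow> (nat \<Rightarrow> nat \<Rightarrow> complex) \<Rightarrow> (nat \<Rightarrow> nat \<Rightarrow> complex) \<Rightarrow> nat \<Rightarrow> nat \<Rightarrow> complex" where
  "sq_mult n B C i j = (\<Sum>r<n. B i r * C r j)"

primrec sq_pow :: "nat \<Rightarrow> (nat \<Rightarrow> nat \<Rightarrow> complex) \<Rightarrow> nat \<Rightarrow> nat \<Rightarrow> nat \<Rightarrow> complex" where
  "sq_pow n B 0 = (\<lambda>i j. if i = j then 1 else 0)"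
| "sq_pow n B (Suc k) = sq_mult n (sq_pow n B k) B"

(* Kronecker product of the factors Bs 0, ..., Bs s, rows/columns indexed by A
   (lexicographic indexing of the Kronecker product) *)
definition kron :: "nat list \<Rightarrow> (nat \<Rightarrow> nat \<Rightarrow> nat \<Rightarrow> complex) \<Rightarrow> nat list \<Rightarrow> nat list \<Rightarrow> complex" where
  "kron m Bs j j' = (\<Prod>l<length m. Bs l (j ! l) (j' ! l))"

definition T_op :: "nat list \<Rightarrow> nat list \<Rightarrow> nat list \<Rightarrow> nat list \<Rightarrow> complex" where
  "T_op m k = kron m (\<lambda>l. sq_pow (m ! l) (circ_shift (m ! l)) (k ! l))"

definition M_op :: "nat list \<Rightarrow> (nat \<Rightarrow> complex) \<Rightarrow> nat list \<Rightarrow> nat list \<Rightarrow> nat list \<Rightarrow> complex" where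
  "M_op m zeta \<kappa> = kron m (\<lambda>l. sq_pow (m ! l) (mod_diag (zeta l) (m ! l)) (\<kappa> ! l))"

definition A_mult :: "nat list \<Rightarrow> (nat list \<Rightarrow> nat list \<Rightarrow> complex) \<Rightarrow> (nat list \<Rightarrow> nat list \<Rightarrow> complex) \<Rightarrow> nat list \<Rightarrow> nat list \<Rightarrow> complex" where
  "A_mult m P Q j j' = (\<Sum>r\<in>GA m. P j r * Q r j')"

definition A_app :: "nat list \<Rightarrow> (nat list \<Rightarrow> nat list \<Rightarrow> complex) \<Rightarrow> (nat list \<Rightarrow> complex) \<Rightarrow> nat list \<Rightarrow> complex" where
  "A_app m P v j = (\<Sum>j'\<in>GA m. P j j' * v j')"

(* psi stacks phi_i (i in I); pi(k,kappa) = I \<otimes> (M^(kappa) T^(k)) acts blockwise.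
   The coordinates of the vector in C^{|m|(|m|-1)/2} are indexed by (i, j) in Iset m \<times> GA m. *)
definition gabor_steiner :: "nat list \<Rightarrow> (nat \<Rightarrow> complex) \<Rightarrow> nat list \<times> nat list \<Rightarrow> nat list \<times> nat list \<Rightarrow> complex" where
  "gabor_steiner m zeta x p =
     (case x of (k, \<kappa>) \<Rightarrow> case p of (i, j) \<Rightarrow>
        A_app m (A_mult m (M_op m zeta \<kappa>) (T_op m k)) (phi_vec m i) j)"

definition gs_coords :: "nat list \<Rightarrow> (nat list \<times> nat list) set" where
  "gs_coords m = Iset m \<times> GA m"

definition cip :: "'y set \<Rightarrow> ('y \<Rightarrow> complex) \<Rightarrow> ('y \<Rightarrow> complex) \<Rightarrow> complex" where
  "cip Y u v = (\<Sum>y\<in>Y. cnj (u y) * v y)"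

definition is_signature_matrix :: "'y set \<Rightarrow> 'x set \<Rightarrow> ('x \<Rightarrow> 'y \<Rightarrow> complex) \<Rightarrow> ('x \<Rightarrow> 'x \<Rightarrow> complex) \<Rightarrow> bool" where
  "is_signature_matrix Y X Phi S \<longleftrightarrow>
     (\<exists>\<nu> \<alpha>::real. \<nu> \<ge> 0 \<and> \<alpha> > 0 \<and>
        (\<forall>x\<in>X. cip Y (Phi x) (Phi x) = complex_of_real (\<nu>\<^sup>2)) \<and>
        (\<forall>x\<in>X. \<forall>y\<in>X. x \<noteq> y \<longrightarrow> cmod (cip Y (Phi x) (Phi y)) = \<alpha>) \<and>
        (\<forall>x\<in>X. \<forall>y\<in>X. S x y =
            (cip Y (Phi x) (Phi y) - (if x = y then complex_of_real (\<nu>\<^sup>2) else 0)) / complex_of_real \<alpha>))"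

definition is_normalized_signature_matrix :: "'y set \<Rightarrow> 'x set \<Rightarrow> 'x \<Rightarrow> ('x \<Rightarrow> 'y \<Rightarrow> complex) \<Rightarrow> ('x \<Rightarrow> 'x \<Rightarrow> complex) \<Rightarrow> bool" where
  "is_normalized_signature_matrix Y X x0 Phi S \<longleftrightarrow>
     (\<exists>c. (\<forall>x\<in>X. cmod (c x) = 1) \<and>
          is_signature_matrix Y X (\<lambda>x y. c x * Phi x y) S \<and>
          (\<forall>x\<in>X. x \<noteq> x0 \<longrightarrow> S x0 x = 1 \<and> S x x0 = 1))"

(* the matrix S-bar; Sbar m zeta x y is the entry in row x, column y *)
definition Sbar :: "nat list \<Rightarrow> (nat \<Rightarrow> complex) \<Rightarrow> nat list \<times> nat list \<Rightarrow> nat list \<times> nat list \<Rightarrow> complex" where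
  "Sbar m zeta x y =
     (let x0 = (ga_zero m, ga_zero m) in
      if x \<noteq> y \<and> x \<noteq> x0 \<and> y \<noteq> x0 then
        (case x of (k, \<kappa>) \<Rightarrow> case y of (kt, \<kappa>t) \<Rightarrow>
          - (\<Prod>l<length m. zeta l ^ nat ((int ((m ! l + 1) div 2) *
                 (int (\<kappa> ! l) * int (kt ! l) - int (\<kappa>t ! l) * int (k ! l))) mod int (m ! l))))
      else (if x = y then 0 else 1))"

end

theory Submission imports Defs begin

lemma zeta_nz: fixes z::complex assumes "z ^ n = 1" "n > 0" shows "z \<noteq> 0"
  using assms by (metis power_0_left less_not_refl zero_neq_one)

lemma zeta_norm: fixes z::complex assumes "z ^ n = 1" "n > 0" shows "norm z = 1"
proof -
  have "norm z ^ n = 1 ^ n" using assms by (metis norm_one norm_power power_one)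
  then show ?thesis using assms power_eq_imp_eq_base by (metis norm_ge_zero zero_le_one)
qed

lemma powi_mod: fixes z::complex assumes "z ^ n = 1" "n > 0"
  shows "z powi (a mod int n) = z powi a"
proof -
  have nz: "z \<noteq> 0" using assms zeta_nz by blast
  have "a = a mod int n + int n * (a div int n)" by simp
  then have "z powi a = z powi (a mod int n) * z powi (int n * (a div int n))"
    by (metis nz power_int_add)
  also have "z powi (int n * (a div int n)) = (z powi int n) powi (a div int n)"
    by (simp add: power_int_mult)
  also have "z powi int n = 1" using assms by (simp add: power_int_of_nat)
  finally show ?thesis by simp
qed

lemma powi_cong: fixes z::complex assumes "z ^ n = 1" "n > 0" "a mod int n = b mod int n"
  shows "z powi a = z powi b"
  by (metis assms powi_mod)

lemma pow_nat_mod: fixes z::complex assumes "z ^ n = 1" "n > 0"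
  shows "z ^ nat (a mod int n) = z powi a"
proof -
  have "z ^ nat (a mod int n) = z powi int (nat (a mod int n))" by (simp only: power_int_of_nat)
  also have "int (nat (a mod int n)) = a mod int n" using assms by simp
  finally show ?thesis using powi_mod[OF assms] by simp
qed

lemma powi_eq1: fixes z::complex assumes "z ^ n = 1" "n > 0"
   "\<forall>d. 0 < d \<and> d < n \<longrightarrow> z ^ d \<noteq> 1"
  shows "z powi a = 1 \<longleftrightarrow> int n dvd a"
proof
  assume h: "z powi a = 1"
  have "z ^ nat (a mod int n) = 1" using h pow_nat_mod[OF assms(1,2)] by simp
  moreover have "nat (a mod int n) < n" using assms(2) by (simp add: nat_less_iff)
  ultimately have "nat (a mod int n) = 0" using assms(3) by (metis neq0_conv)
  then have "a mod int n = 0" using assms(2)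
    by (metis Euclidean_Rings.pos_mod_sign int_nat_eq of_nat_0_less_iff of_nat_eq_0_iff)
  then show "int n dvd a" by auto
next
  assume "int n dvd a"
  then have "a mod int n = 0 mod int n" by simp
  then show "z powi a = 1" using powi_cong[OF assms(1,2)] by (metis power_int_0_right)
qed

lemma powi_cnj: fixes z::complex assumes "z ^ n = 1" "n > 0"
  shows "cnj (z powi a) = z powi (- a)"
proof -
  have "norm z = 1" using zeta_norm assms by blast
  then have "cnj z = inverse z"
    by (metis complex_norm_square divide_inverse inverse_1 mult_1 power_one right_inverse assms zeta_nz
        nonzero_mult_div_cancel_left of_real_1 div_by_1)
  then show ?thesis by (simp add: complex_cnj_power_int power_int_inverse power_int_minus)
qed

lemma powi_norm: fixes z::complex assumes "z ^ n = 1" "n > 0"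
  shows "norm (z powi a) = 1"
  using zeta_norm[OF assms] by (simp add: norm_power_int)


lemma GA_Nil: "GA [] = {[]}"
  by (auto simp: GA_def)

lemma GA_Cons: "GA (x # m) = (\<lambda>(a, t). a # t) ` ({..<x} \<times> GA m)"
proof (rule set_eqI, rule iffI)
  fix k assume "k \<in> GA (x # m)"
  then obtain a t where k: "k = a # t" and "length t = length m"
    and h: "\<forall>l<Suc (length m). k ! l < (x # m) ! l"
    by (auto simp: GA_def length_Suc_conv)
  have "a < x" using h[rule_format, of 0] k by simp
  moreover have "\<forall>l<length m. t ! l < m ! l"
  proof (intro allI impI)
    fix l assume "l < length m"
    then show "t ! l < m ! l" using h[rule_format, of "Suc l"] k by simp
  qed
  ultimately show "k \<in> (\<lambda>(a, t). a # t) ` ({..<x} \<times> GA m)"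
    using k \<open>length t = length m\<close> by (auto simp: GA_def)
next
  fix k assume "k \<in> (\<lambda>(a, t). a # t) ` ({..<x} \<times> GA m)"
  then show "k \<in> GA (x # m)"
    by (auto simp: GA_def nth_Cons split: nat.splits)
qed

lemma finite_GA: "finite (GA m)"
  by (induction m) (auto simp: GA_Nil GA_Cons)

lemma card_GA: "card (GA m) = prod_list m"
proof (induction m)
  case Nil then show ?case by (simp add: GA_Nil)
next
  case (Cons x m)
  have "inj_on (\<lambda>(a, t). a # t) ({..<x} \<times> GA m)" by (auto simp: inj_on_def)
  then have "card (GA (x # m)) = card ({..<x} \<times> GA m)"
    by (simp add: GA_Cons card_image)
  then show ?case using Cons by (simp add: card_cartesian_product)
qed

lemma sum_GA_prod:
  "(\<Sum>j\<in>GA m. \<Prod>l<length m. f l (j ! l)) = (\<Prod>l<length m. \<Sum>t<m ! l. (f l t :: complex))"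
proof (induction m arbitrary: f)
  case Nil then show ?case by (simp add: GA_Nil)
next
  case (Cons x m)
  have inj: "inj_on (\<lambda>(a, t). a # t) ({..<x} \<times> GA m)" by (auto simp: inj_on_def)
  have "(\<Sum>j\<in>GA (x # m). \<Prod>l<length (x # m). f l (j ! l))
      = (\<Sum>p\<in>{..<x} \<times> GA m. \<Prod>l<length (x # m). f l ((fst p # snd p) ! l))"
    by (simp only: GA_Cons sum.reindex[OF inj] o_def case_prod_beta)
  also have "\<dots> = (\<Sum>p\<in>{..<x} \<times> GA m. f 0 (fst p) * (\<Prod>l<length m. f (Suc l) (snd p ! l)))"
    by (simp only: length_Cons prod.lessThan_Suc_shift nth_Cons_0 nth_Cons_Suc)
  also have "\<dots> = (\<Sum>a<x. \<Sum>t\<in>GA m. f 0 a * (\<Prod>l<length m. f (Suc l) (t ! l)))"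
    by (simp add: sum.cartesian_product case_prod_beta)
  also have "\<dots> = (\<Sum>a<x. f 0 a) * (\<Sum>t\<in>GA m. \<Prod>l<length m. f (Suc l) (t ! l))"
    by (simp add: sum_product)
  also have "\<dots> = (\<Sum>a<x. f 0 a) * (\<Prod>l<length m. \<Sum>t<m ! l. f (Suc l) t)"
    using Cons[of "\<lambda>l. f (Suc l)"] by simp
  also have "\<dots> = (\<Prod>l<length (x # m). \<Sum>t<(x # m) ! l. f l t)"
    by (simp only: length_Cons prod.lessThan_Suc_shift nth_Cons_0 nth_Cons_Suc)
  finally show ?case .
qed

lemma prod_indicator:
  "(\<Prod>l<(n::nat). if P l then 1 else (0::complex)) = (if \<forall>l<n. P l then 1 else 0)"
  by (induction n) (auto simp: less_Suc_eq)

lemma GA_eqI: "j \<in> GA m \<Longrightarrow> length j' = length m \<Longrightarrow> (j = j') = (\<forall>l<length m. j ! l = j' ! l)"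
  by (auto simp: GA_def list_eq_iff_nth_eq)


lemma sum_single:
  assumes "finite S" "a \<in> S" "\<And>r. r \<in> S \<Longrightarrow> r \<noteq> a \<Longrightarrow> f r = 0"
  shows "sum f S = f a"
proof -
  have "sum f S = f a + sum f (S - {a})" using assms by (simp add: sum.remove)
  also have "sum f (S - {a}) = 0" using assms by (intro sum.neutral) auto
  finally show ?thesis by simp
qed

definition gadd :: "nat list \<Rightarrow> nat list \<Rightarrow> nat list \<Rightarrow> nat list" where
  "gadd m j k = map (\<lambda>l. (j ! l + k ! l) mod m ! l) [0..<length m]"

definition chi :: "nat list \<Rightarrow> (nat \<Rightarrow> complex) \<Rightarrow> nat list \<Rightarrow> nat list \<Rightarrow> complex" where
  "chi m zeta \<kappa> j = (\<Prod>l<length m. zeta l ^ (j ! l * \<kappa> ! l))"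

lemma gadd_GA: "\<forall>l<length m. 0 < m ! l \<Longrightarrow> gadd m j k \<in> GA m"
  by (auto simp: gadd_def GA_def)

lemma length_gadd [simp]: "length (gadd m j k) = length m"
  by (simp add: gadd_def)

lemma gadd_nth: "l < length m \<Longrightarrow> gadd m j k ! l = (j ! l + k ! l) mod m ! l"
  by (simp add: gadd_def)

lemma sq_pow_shift: "i < n \<Longrightarrow> sq_pow n (circ_shift n) k i j = (if j = (i + k) mod n then 1 else 0)"
proof (induction k arbitrary: j)
  case 0 then show ?case by simp
next
  case (Suc k)
  have "sq_pow n (circ_shift n) (Suc k) i j
      = (\<Sum>r<n. (if r = (i + k) mod n then 1 else 0) * circ_shift n r j)"
    using Suc by (simp add: sq_mult_def)
  also have "\<dots> = circ_shift n ((i + k) mod n) j"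
    using Suc.prems by (subst sum_single[where a="(i + k) mod n"]) auto
  also have "\<dots> = (if j = (i + Suc k) mod n then 1 else 0)"
    by (simp add: circ_shift_def mod_Suc_eq)
  finally show ?case .
qed

lemma sq_pow_diag: "i < n \<Longrightarrow> sq_pow n (mod_diag z n) k i j = (if i = j then z ^ (i * k) else 0)"
proof (induction k arbitrary: j)
  case 0 then show ?case by simp
next
  case (Suc k)
  have "sq_pow n (mod_diag z n) (Suc k) i j
      = (\<Sum>r<n. (if i = r then z ^ (i * k) else 0) * mod_diag z n r j)"
    using Suc by (simp add: sq_mult_def)
  also have "\<dots> = z ^ (i * k) * mod_diag z n i j"
    using Suc.prems by (subst sum_single[where a=i]) auto
  also have "\<dots> = (if i = j then z ^ (i * Suc k) else 0)"
    by (simp add: mod_diag_def power_add mult.commute)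
  finally show ?case .
qed

lemma T_op_eval:
  assumes "j \<in> GA m" "j' \<in> GA m"
  shows "T_op m k j j' = (if j' = gadd m j k then 1 else 0)"
proof -
  have "T_op m k j j' = (\<Prod>l<length m. if j' ! l = (j ! l + k ! l) mod m ! l then 1 else 0)"
    unfolding T_op_def kron_def
    by (rule prod.cong) (use assms in \<open>auto simp: GA_def sq_pow_shift\<close>)
  also have "\<dots> = (if j' = gadd m j k then 1 else 0)"
    using assms by (simp only: prod_indicator) (auto simp: list_eq_iff_nth_eq gadd_nth GA_def)
  finally show ?thesis .
qed

lemma M_op_eval:
  assumes "j \<in> GA m" "j' \<in> GA m"
  shows "M_op m zeta \<kappa> j j' = (if j = j' then chi m zeta \<kappa> j else 0)"
proof -
  have "M_op m zeta \<kappa> j j' = (\<Prod>l<length m. if j ! l = j' ! l then zeta l ^ (j ! l * \<kappa> ! l) else 0)"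
    unfolding M_op_def kron_def
    by (rule prod.cong) (use assms in \<open>auto simp: GA_def sq_pow_diag\<close>)
  also have "\<dots> = (if j = j' then chi m zeta \<kappa> j else 0)"
  proof (cases "j = j'")
    case True then show ?thesis by (simp add: chi_def)
  next
    case False
    then obtain l where "l < length m" "j ! l \<noteq> j' ! l" using assms GA_eqI[of j m j'] by (auto simp: GA_def)
    then show ?thesis using False by (auto intro!: prod_zero)
  qed
  finally show ?thesis .
qed

lemma gs_eval:
  assumes pos: "\<forall>l<length m. 0 < m ! l" and j: "j \<in> GA m"
  shows "gabor_steiner m zeta (k, \<kappa>) (i, j) = chi m zeta \<kappa> j * phi_vec m i (gadd m j k)"
proof -
  have am: "A_mult m (M_op m zeta \<kappa>) (T_op m k) j j' = chi m zeta \<kappa> j * (if j' = gadd m j k then 1 else 0)"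
    if "j' \<in> GA m" for j'
  proof -
    have "A_mult m (M_op m zeta \<kappa>) (T_op m k) j j'
        = (\<Sum>r\<in>GA m. (if j = r then chi m zeta \<kappa> j * T_op m k r j' else 0))"
      unfolding A_mult_def by (rule sum.cong) (use j in \<open>auto simp: M_op_eval\<close>)
    also have "\<dots> = chi m zeta \<kappa> j * T_op m k j j'" using j finite_GA by (subst sum_single[where a=j]) auto
    finally show ?thesis using T_op_eval[OF j that] by simp
  qed
  have "gabor_steiner m zeta (k, \<kappa>) (i, j)
     = (\<Sum>j'\<in>GA m. (if j' = gadd m j k then chi m zeta \<kappa> j * phi_vec m i j' else 0))"
    unfolding gabor_steiner_def A_app_def by (auto simp: am intro!: sum.cong)
  also have "\<dots> = chi m zeta \<kappa> j * phi_vec m i (gadd m j k)"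
    using gadd_GA[OF pos] finite_GA by (subst sum_single[where a="gadd m j k"]) auto
  finally show ?thesis .
qed


abbreviation "negm1 \<equiv> ga_neg_minus_one"

lemma lex_conv: "List.lexordp (<) xs ys = ord_class.lexordp (xs::nat list) ys"
  by (simp add: List.lexordp_def lexordp_conv_lexord)

lemmas lex_linear = lexordp_linear[where 'a=nat, folded lex_conv]
lemmas lex_antisym = lexordp_antisym[where 'a=nat, folded lex_conv]
lemmas lex_irrefl = lexordp_irreflexive'[where 'a=nat, folded lex_conv]
lemmas lex_trans = lexordp_trans[where 'a=nat, folded lex_conv]

lemma lexC: "List.lexordp (<) (x#xs) (y#ys) = (x < y \<or> \<not> y < x \<and> List.lexordp (<) xs (ys::nat list))"
  by (simp add: lex_conv)

lemma length_negm1 [simp]: "length (negm1 m a) = length m"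
  by (simp add: ga_neg_minus_one_def)

lemma negm1_nth: "a \<in> GA m \<Longrightarrow> l < length m \<Longrightarrow> negm1 m a ! l = m ! l - 1 - a ! l"
proof -
  assume a: "a \<in> GA m" and l: "l < length m"
  then have lt: "a ! l < m ! l" by (auto simp: GA_def)
  have "2 * m ! l - a ! l - 1 = (m ! l - 1 - a ! l) + 1 * m ! l" using lt by simp
  then have "(2 * m ! l - a ! l - 1) mod m ! l = (m ! l - 1 - a ! l) mod m ! l"
    by (metis mod_mult_self1)
  also have "\<dots> = m ! l - 1 - a ! l" using lt by simp
  finally show ?thesis using l by (simp add: ga_neg_minus_one_def)
qed

lemma negm1_GA: "a \<in> GA m \<Longrightarrow> negm1 m a \<in> GA m"
  by (auto simp: GA_def negm1_nth)

lemma negm1_invol: "a \<in> GA m \<Longrightarrow> negm1 m (negm1 m a) = a"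
  using negm1_GA[of a m] by (auto simp: GA_def negm1_nth list_eq_iff_nth_eq)

lemma negm1_map2: "a \<in> GA m \<Longrightarrow> negm1 m a = map2 (\<lambda>x y. x - 1 - y) m a"
  by (auto simp: GA_def negm1_nth list_eq_iff_nth_eq)

lemma lex_rev:
  "list_all2 (<) xs ms \<Longrightarrow> list_all2 (<) ys ms \<Longrightarrow>
   lexordp (<) (map2 (\<lambda>x y. x - 1 - y) ms xs) (map2 (\<lambda>x y. x - 1 - y) ms ys) = lexordp (<) ys (xs :: nat list)"
proof (induction xs ms arbitrary: ys rule: list_all2_induct)
  case Nil then show ?case by simp
next
  case (Cons x xs m ms)
  then obtain y ys' where ys: "ys = y # ys'" "y < m" "list_all2 (<) ys' ms"
    by (cases ys) auto
  show ?case using Cons.IH[OF ys(3)] Cons.hyps(1) ys by (auto simp: lexC)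
qed

lemma GA_list_all2: "a \<in> GA m \<Longrightarrow> list_all2 (<) a m"
  by (auto simp: GA_def list_all2_conv_all_nth)

lemma lex_negm1: "a \<in> GA m \<Longrightarrow> b \<in> GA m \<Longrightarrow>
   lexordp (<) (negm1 m a) (negm1 m b) = lexordp (<) b a"
  using lex_rev[OF GA_list_all2 GA_list_all2] by (simp add: negm1_map2)

definition rk :: "nat list \<Rightarrow> nat list \<Rightarrow> nat" where
  "rk m a = card {j \<in> GA m. lexordp (<) j a}"

lemma rk_split: "a \<in> GA m \<Longrightarrow> rk m a + card {j \<in> GA m. lexordp (<) a j} + 1 = prod_list m"
proof -
  assume a: "a \<in> GA m"
  let ?L = "{j \<in> GA m. lexordp (<) j a}" and ?R = "{j \<in> GA m. lexordp (<) a j}"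
  have GA: "GA m = insert a (?L \<union> ?R)" using a lex_linear[of a] by auto
  have d1: "?L \<inter> ?R = {}" using lex_antisym[of a] by auto
  have "a \<notin> ?L \<union> ?R" using lex_irrefl by auto
  then have "card (GA m) = card (?L \<union> ?R) + 1"
    using arg_cong[of _ _ card, OF GA] finite_GA[of m] by simp
  also have "card (?L \<union> ?R) = card ?L + card ?R"
    using d1 finite_GA[of m] by (intro card_Un_disjoint) auto
  finally show ?thesis by (simp add: card_GA rk_def)
qed

lemma rk_negm1: "a \<in> GA m \<Longrightarrow> rk m (negm1 m a) = card {j \<in> GA m. lexordp (<) a j}"
proof -
  assume a: "a \<in> GA m"
  have "{j \<in> GA m. lexordp (<) j (negm1 m a)} = negm1 m ` {j \<in> GA m. lexordp (<) a j}"
  proof (rule set_eqI, rule iffI)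
    fix j assume j: "j \<in> {j \<in> GA m. lexordp (<) j (negm1 m a)}"
    then have "lexordp (<) a (negm1 m j)"
      using lex_negm1[of "negm1 m j" m a] a by (simp add: negm1_invol negm1_GA)
    then show "j \<in> negm1 m ` {j \<in> GA m. lexordp (<) a j}" using j
      by (intro image_eqI[of _ _ "negm1 m j"]) (auto simp: negm1_invol negm1_GA)
  next
    fix j assume "j \<in> negm1 m ` {j \<in> GA m. lexordp (<) a j}"
    then show "j \<in> {j \<in> GA m. lexordp (<) j (negm1 m a)}"
      using a lex_negm1 negm1_GA by auto
  qed
  moreover have "inj_on (negm1 m) {j \<in> GA m. lexordp (<) a j}"
    by (rule inj_on_inverseI[where g="negm1 m"]) (simp add: negm1_invol)
  ultimately show ?thesis by (simp add: rk_def card_image)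
qed

lemma rk_inj: "a \<in> GA m \<Longrightarrow> b \<in> GA m \<Longrightarrow> rk m a = rk m b \<Longrightarrow> a = b"
proof (rule ccontr)
  assume a: "a \<in> GA m" and b: "b \<in> GA m" and e: "rk m a = rk m b" and ne: "a \<noteq> b"
  have lt: "rk m x < rk m y" if x: "x \<in> GA m" and y: "y \<in> GA m" and xy: "lexordp (<) x y" for x y
  proof -
    have "{j \<in> GA m. lexordp (<) j x} \<subset> {j \<in> GA m. lexordp (<) j y}"
      using xy x lex_trans[of _ x y] lex_irrefl[of x] by blast
    then show ?thesis unfolding rk_def using finite_GA by (intro psubset_card_mono) auto
  qed
  show False using lex_linear[of a b] ne lt[OF a b] lt[OF b a] e by auto
qed

lemma odd_prod_list: "\<forall>x\<in>set m. odd x \<Longrightarrow> odd (prod_list (m :: nat list))"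
  by (induction m) auto

lemma Iset_GA: "Iset m \<subseteq> GA m"
  by (auto simp: Iset_def)

lemma Iset_neg:
  assumes odd: "odd (prod_list m)" and i: "i \<in> Iset m"
  shows "negm1 m i \<notin> Iset m"
proof -
  have iG: "i \<in> GA m" using i by (auto simp: Iset_def)
  have "rk m i < (prod_list m - 1) div 2" using i by (simp add: Iset_def rk_def absm_def)
  moreover have "rk m (negm1 m i) = prod_list m - 1 - rk m i"
    using rk_split[OF iG] rk_negm1[OF iG] by simp
  ultimately have "\<not> rk m (negm1 m i) < (prod_list m - 1) div 2" using odd
    by (auto elim!: oddE)
  then show ?thesis by (simp add: Iset_def rk_def absm_def)
qed

lemma Iset_center:
  assumes odd: "odd (prod_list m)" and a: "a \<in> GA m" and n1: "a \<notin> Iset m" and n2: "negm1 m a \<notin> Iset m"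
  shows "negm1 m a = a"
proof -
  have r1: "\<not> rk m a < (prod_list m - 1) div 2" using n1 a by (simp add: Iset_def rk_def absm_def)
  have r2: "\<not> rk m (negm1 m a) < (prod_list m - 1) div 2" using n2 negm1_GA[OF a]
    by (simp add: Iset_def rk_def absm_def)
  have "rk m (negm1 m a) = prod_list m - 1 - rk m a"
    using rk_split[OF a] rk_negm1[OF a] by simp
  moreover have "rk m a \<le> prod_list m - 1" using rk_split[OF a] by simp
  ultimately have "rk m (negm1 m a) = rk m a" using r1 r2 odd by (auto elim!: oddE)
  then show ?thesis using rk_inj negm1_GA a by blast
qed


lemma phi_vec_nz: "i \<in> GA m \<Longrightarrow> phi_vec m i x \<noteq> 0 \<Longrightarrow> i = x \<or> i = negm1 m x"
  by (auto simp: phi_vec_def negm1_invol split: if_splits)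

lemma phi_sum:
  assumes odd: "odd (prod_list m)" and a: "a \<in> GA m" and b: "b \<in> GA m"
  shows "(\<Sum>i\<in>Iset m. phi_vec m i a * phi_vec m i b)
       = (if a = b then 1 else 0) - (if b = negm1 m a then 1 else 0)"
proof -
  have fin: "finite (Iset m)" using finite_GA Iset_GA finite_subset by blast
  have nz: "i = a \<or> i = negm1 m a" if "i \<in> Iset m" "phi_vec m i a * phi_vec m i b \<noteq> 0" for i
    using phi_vec_nz[of i m a] that Iset_GA by auto
  consider (A) "a \<in> Iset m" | (B) "negm1 m a \<in> Iset m" | (C) "a \<notin> Iset m" "negm1 m a \<notin> Iset m"
    by blast
  then show ?thesis
  proof cases
    case A
    then have na: "negm1 m a \<notin> Iset m" using Iset_neg odd by blast
    then have ne: "negm1 m a \<noteq> a" using A by auto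
    have "(\<Sum>i\<in>Iset m. phi_vec m i a * phi_vec m i b) = phi_vec m a a * phi_vec m a b"
      using fin A na nz by (intro sum_single) auto
    then show ?thesis using ne by (auto simp: phi_vec_def)
  next
    case B
    then have na: "a \<notin> Iset m" using Iset_neg[OF odd B] negm1_invol[OF a] by simp
    then have ne: "negm1 m a \<noteq> a" using B by auto
    have "(\<Sum>i\<in>Iset m. phi_vec m i a * phi_vec m i b) = phi_vec m (negm1 m a) a * phi_vec m (negm1 m a) b"
      using fin B na nz by (intro sum_single) auto
    then show ?thesis using ne negm1_invol[OF a] by (auto simp: phi_vec_def)
  next
    case C
    then have e: "negm1 m a = a" using Iset_center[OF odd a] by blast
    have "(\<Sum>i\<in>Iset m. phi_vec m i a * phi_vec m i b) = 0"
      using C nz by (intro sum.neutral) blast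
    then show ?thesis using e by auto
  qed
qed


lemma add_mod_cancel: fixes a b c n :: nat
  assumes "b < n" "c < n" "(a + b) mod n = (a + c) mod n" shows "b = c"
proof -
  have "int n dvd int (a + b) - int (a + c)"
    using assms(3) by (metis mod_eq_dvd_iff of_nat_mod)
  then have d: "int n dvd int b - int c" by simp
  show ?thesis
  proof (rule ccontr)
    assume "b \<noteq> c"
    then have "0 < \<bar>int b - int c\<bar>" "\<bar>int b - int c\<bar> < int n" using assms by auto
    moreover have "int n dvd \<bar>int b - int c\<bar>" using d by simp
    ultimately have "int n \<le> \<bar>int b - int c\<bar>" using zdvd_imp_le by blast
    then show False using \<open>\<bar>int b - int c\<bar> < int n\<close> by linarith
  qed
qed

lemma modsum_iff: fixes x y M :: int
  assumes "0 \<le> x" "x < M" "0 \<le> y" "y < M"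
  shows "y = M - 1 - x \<longleftrightarrow> M dvd x + y + 1"
proof
  assume "y = M - 1 - x" then show "M dvd x + y + 1" by simp
next
  assume "M dvd x + y + 1"
  then obtain q where q: "x + y + 1 = M * q" by (auto elim: dvdE)
  have M0: "M > 0" using assms by simp
  have "q > 0"
  proof (rule ccontr)
    assume "\<not> q > 0"
    then have "M * q \<le> 0" using M0 by (simp add: mult_nonneg_nonpos)
    then show False using q assms by simp
  qed
  moreover have "q < 2"
  proof (rule ccontr)
    assume "\<not> q < 2"
    then have "M * 2 \<le> M * q" using M0 by (intro mult_left_mono) auto
    then show False using q assms by linarith
  qed
  ultimately have "q = 1" by simp
  then show "y = M - 1 - x" using q by simp
qed

lemma half_iff: fixes j s M h :: int
  assumes "2 * h = M + 1"
  shows "M dvd 2 * j + s \<longleftrightarrow> M dvd j + h * s"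
proof
  assume a1: "M dvd 2 * j + s"
  have a2: "M dvd h * (2 * j + s)" using a1 by (rule dvd_mult)
  have a3: "M dvd M * j" by simp
  have "M dvd h * (2 * j + s) - M * j" using a2 a3 by (rule dvd_diff)
  moreover have "h * (2 * j + s) - M * j = (2 * h) * j + h * s - M * j" by (simp add: algebra_simps)
  moreover have "(2 * h) * j + h * s - M * j = j + h * s" unfolding assms by (simp add: algebra_simps)
  ultimately show "M dvd j + h * s" by metis
next
  assume a1: "M dvd j + h * s"
  have a2: "M dvd 2 * (j + h * s)" using a1 by (rule dvd_mult)
  have a3: "M dvd M * s" by simp
  have "M dvd 2 * (j + h * s) - M * s" using a2 a3 by (rule dvd_diff)
  moreover have "2 * (j + h * s) - M * s = 2 * j + (2 * h) * s - M * s" by (simp add: algebra_simps)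
  moreover have "2 * j + (2 * h) * s - M * s = 2 * j + s" unfolding assms by (simp add: algebra_simps)
  ultimately show "M dvd 2 * j + s" by metis
qed


lemma comp_iff: fixes j k k' n :: nat
  assumes odd: "odd n" and jn: "j < n"
  shows "((j + k') mod n = n - 1 - (j + k) mod n) \<longleftrightarrow>
         j = nat ((int ((n + 1) div 2) * (- 1 - int k - int k')) mod int n)"
proof -
  have n0: "n > 0" using odd by (cases n) auto
  define x where "x = (j + k) mod n"
  define y where "y = (j + k') mod n"
  define h where "h = int ((n + 1) div 2)"
  define s where "s = 1 + int k + int k'"
  have xn: "x < n" "y < n" using n0 by (auto simp: x_def y_def)
  have "(y = n - 1 - x) \<longleftrightarrow> int y = int n - 1 - int x" using xn by auto
  also have "\<dots> \<longleftrightarrow> int n dvd int x + int y + 1" using xn by (intro modsum_iff) auto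
  also have "int x + int y + 1 = (2 * int j + s) + (- int ((j + k) div n) - int ((j + k') div n)) * int n"
  proof -
    have "int (j + k) = int x + int n * int ((j + k) div n)" unfolding x_def
      by (metis div_mult_mod_eq add.commute mult.commute of_nat_add of_nat_mult)
    moreover have "int (j + k') = int y + int n * int ((j + k') div n)" unfolding y_def
      by (metis div_mult_mod_eq add.commute mult.commute of_nat_add of_nat_mult)
    ultimately show ?thesis unfolding s_def by (simp add: algebra_simps)
  qed
  also have "int n dvd (2 * int j + s) + (- int ((j + k) div n) - int ((j + k') div n)) * int n
             \<longleftrightarrow> int n dvd 2 * int j + s" by (rule dvd_add_times_triv_right_iff)
  also have "\<dots> \<longleftrightarrow> int n dvd int j + h * s"
  proof (rule half_iff)
    show "2 * h = int n + 1" using odd unfolding h_def by (auto elim!: oddE)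
  qed
  also have "\<dots> \<longleftrightarrow> int j mod int n = (h * (- 1 - int k - int k')) mod int n"
  proof -
    have "int j + h * s = int j - h * (- 1 - int k - int k')" unfolding s_def by (simp add: algebra_simps)
    then show ?thesis by (simp add: mod_eq_dvd_iff)
  qed
  also have "int j mod int n = int j" using jn by simp
  also have "(int j = (h * (- 1 - int k - int k')) mod int n) \<longleftrightarrow> j = nat ((h * (- 1 - int k - int k')) mod int n)"
    using n0 by auto
  finally show ?thesis unfolding x_def y_def h_def .
qed


lemma geom:
  fixes z :: complex
  assumes "z ^ n = 1" "n > 0" "\<forall>d. 0 < d \<and> d < n \<longrightarrow> z ^ d \<noteq> 1"
  shows "(\<Sum>t<n. z powi (int t * d)) = (if int n dvd d then of_nat n else 0)"
proof -
  define w where "w = z powi d"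
  have nz: "z \<noteq> 0" using assms zeta_nz by blast
  have e: "z powi (int t * d) = w ^ t" for t
    unfolding w_def by (metis mult.commute power_int_mult power_int_of_nat)
  have wn: "w ^ n = 1"
  proof -
    have "w ^ n = z powi (int n * d)" using e by simp
    also have "\<dots> = (z powi int n) powi d" by (simp add: power_int_mult)
    also have "\<dots> = 1" using assms(1) by (simp add: power_int_of_nat)
    finally show ?thesis .
  qed
  show ?thesis
  proof (cases "int n dvd d")
    case True
    then have "w = 1" unfolding w_def using powi_eq1[OF assms] by simp
    then show ?thesis using True by (simp add: e)
  next
    case False
    then have "w \<noteq> 1" unfolding w_def using powi_eq1[OF assms] by simp
    then have "(\<Sum>t<n. w ^ t) = 0" using wn by (simp add: sum_gp_strict)
    then show ?thesis using False by (simp add: e)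
  qed
qed

definition good :: "nat list \<Rightarrow> (nat \<Rightarrow> complex) \<Rightarrow> bool" where
  "good m zeta \<longleftrightarrow> (\<forall>l<length m. odd (m ! l) \<and> m ! l \<ge> 3) \<and>
     (\<forall>l<length m. zeta l ^ (m ! l) = 1 \<and> (\<forall>d. 0 < d \<and> d < m ! l \<longrightarrow> zeta l ^ d \<noteq> 1))"

lemma good_pos: "good m zeta \<Longrightarrow> l < length m \<Longrightarrow> 0 < m ! l"
  by (auto simp: good_def)

lemma good_pos': "good m zeta \<Longrightarrow> \<forall>l<length m. 0 < m ! l"
  by (auto simp: good_def)

lemma good_odd: "good m zeta \<Longrightarrow> l < length m \<Longrightarrow> odd (m ! l)"
  by (auto simp: good_def)

lemma good_zeta: "good m zeta \<Longrightarrow> l < length m \<Longrightarrow> zeta l ^ (m ! l) = 1"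
  by (auto simp: good_def)

lemma good_prim: "good m zeta \<Longrightarrow> l < length m \<Longrightarrow> \<forall>d. 0 < d \<and> d < m ! l \<longrightarrow> zeta l ^ d \<noteq> 1"
  by (auto simp: good_def)

lemma good_odd_prod: "good m zeta \<Longrightarrow> odd (prod_list m)"
  by (rule odd_prod_list) (auto simp: good_def in_set_conv_nth)

lemma cnj_chi:
  assumes g: "good m zeta" and j: "j \<in> GA m"
  shows "cnj (chi m zeta \<kappa> j) * chi m zeta \<kappa>' j
       = (\<Prod>l<length m. zeta l powi (int (j ! l) * (int (\<kappa>' ! l) - int (\<kappa> ! l))))"
proof -
  have "cnj (chi m zeta \<kappa> j) * chi m zeta \<kappa>' j
      = (\<Prod>l<length m. cnj (zeta l powi (int (j ! l) * int (\<kappa> ! l))) * zeta l powi (int (j ! l) * int (\<kappa>' ! l)))"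
  proof -
    have e: "zeta l ^ (j ! l * k ! l) = zeta l powi (int (j ! l) * int (k ! l))" for l k
      by (metis of_nat_mult power_int_of_nat)
    show ?thesis unfolding chi_def e by (simp only: cnj_prod prod.distrib)
  qed
  also have "\<dots> = (\<Prod>l<length m. zeta l powi (int (j ! l) * (int (\<kappa>' ! l) - int (\<kappa> ! l))))"
  proof (rule prod.cong)
    fix l assume "l \<in> {..<length m}"
    then have l: "l < length m" by simp
    have z: "zeta l ^ (m ! l) = 1" "0 < m ! l" using g l good_zeta good_pos by auto
    have nz: "zeta l \<noteq> 0" using zeta_nz[OF z] .
    show "cnj (zeta l powi (int (j ! l) * int (\<kappa> ! l))) * zeta l powi (int (j ! l) * int (\<kappa>' ! l))
        = zeta l powi (int (j ! l) * (int (\<kappa>' ! l) - int (\<kappa> ! l)))"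
    proof -
      have "cnj (zeta l powi (int (j ! l) * int (\<kappa> ! l))) = zeta l powi (- (int (j ! l) * int (\<kappa> ! l)))"
        by (rule powi_cnj[OF z])
      moreover have "zeta l powi (- (int (j ! l) * int (\<kappa> ! l))) * zeta l powi (int (j ! l) * int (\<kappa>' ! l))
          = zeta l powi (- (int (j ! l) * int (\<kappa> ! l)) + int (j ! l) * int (\<kappa>' ! l))"
        by (rule power_int_add[OF disjI1[OF nz], symmetric])
      moreover have "- (int (j ! l) * int (\<kappa> ! l)) + int (j ! l) * int (\<kappa>' ! l)
          = int (j ! l) * (int (\<kappa>' ! l) - int (\<kappa> ! l))" by (simp add: algebra_simps)
      ultimately show ?thesis by simp
    qed
  qed simp
  finally show ?thesis .
qed

lemma char_sum:
  assumes g: "good m zeta" and \<kappa>: "\<kappa> \<in> GA m" and \<kappa>': "\<kappa>' \<in> GA m"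
  shows "(\<Sum>j\<in>GA m. \<Prod>l<length m. zeta l powi (int (j ! l) * (int (\<kappa>' ! l) - int (\<kappa> ! l))))
       = (if \<kappa> = \<kappa>' then of_nat (prod_list m) else 0)"
proof -
  have "(\<Sum>j\<in>GA m. \<Prod>l<length m. zeta l powi (int (j ! l) * (int (\<kappa>' ! l) - int (\<kappa> ! l))))
     = (\<Prod>l<length m. \<Sum>t<m ! l. zeta l powi (int t * (int (\<kappa>' ! l) - int (\<kappa> ! l))))"
    by (rule sum_GA_prod)
  also have "\<dots> = (\<Prod>l<length m. if int (m ! l) dvd (int (\<kappa>' ! l) - int (\<kappa> ! l)) then of_nat (m ! l) else 0)"
    using g by (intro prod.cong refl geom) (auto simp: good_def)
  also have "\<dots> = (if \<kappa> = \<kappa>' then of_nat (prod_list m) else 0)"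
  proof (cases "\<kappa> = \<kappa>'")
    case True
    have "of_nat (prod_list m) = (\<Prod>l<length m. (of_nat (m ! l) :: complex))"
      by (simp add: prod.list_conv_set_nth atLeast0LessThan)
    then show ?thesis using True by simp
  next
    case False
    then obtain l where l: "l < length m" "\<kappa> ! l \<noteq> \<kappa>' ! l"
      using \<kappa> \<kappa>' by (auto simp: GA_def list_eq_iff_nth_eq)
    have lt: "\<kappa> ! l < m ! l" "\<kappa>' ! l < m ! l" using \<kappa> \<kappa>' l by (auto simp: GA_def)
    have "\<not> int (m ! l) dvd (int (\<kappa>' ! l) - int (\<kappa> ! l))"
    proof
      assume d: "int (m ! l) dvd (int (\<kappa>' ! l) - int (\<kappa> ! l))"
      have "0 < \<bar>int (\<kappa>' ! l) - int (\<kappa> ! l)\<bar>" using l by auto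
      moreover have "int (m ! l) dvd \<bar>int (\<kappa>' ! l) - int (\<kappa> ! l)\<bar>" using d by simp
      ultimately have "int (m ! l) \<le> \<bar>int (\<kappa>' ! l) - int (\<kappa> ! l)\<bar>" using zdvd_imp_le by blast
      then show False using lt by linarith
    qed
    then have z0: "(if int (m ! l) dvd (int (\<kappa>' ! l) - int (\<kappa> ! l)) then of_nat (m ! l) else (0::complex)) = 0"
      by simp
    have "(\<Prod>l<length m. if int (m ! l) dvd (int (\<kappa>' ! l) - int (\<kappa> ! l)) then of_nat (m ! l) else (0::complex)) = 0"
      apply (rule prod_zero)
       apply simp
      apply (rule bexI[of _ l])
      using z0 l(1) by auto
    then show ?thesis using False by simp
  qed
  finally show ?thesis .
qed


definition hh :: "nat list \<Rightarrow> nat \<Rightarrow> int" where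
  "hh m l = int ((m ! l + 1) div 2)"

definition j0 :: "nat list \<Rightarrow> nat list \<Rightarrow> nat list \<Rightarrow> nat list" where
  "j0 m k k' = map (\<lambda>l. nat ((hh m l * (- 1 - int (k ! l) - int (k' ! l))) mod int (m ! l))) [0..<length m]"

definition gg :: "nat list \<Rightarrow> (nat \<Rightarrow> complex) \<Rightarrow> nat list \<times> nat list \<Rightarrow> nat list \<times> nat list \<Rightarrow> complex" where
  "gg m zeta x y = (case x of (k, \<kappa>) \<Rightarrow> case y of (k', \<kappa>') \<Rightarrow>
     \<Prod>l<length m. zeta l powi (hh m l * (- 1 - int (k ! l) - int (k' ! l)) * (int (\<kappa>' ! l) - int (\<kappa> ! l))))"

lemma j0_GA: "good m zeta \<Longrightarrow> j0 m k k' \<in> GA m"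
proof -
  assume g: "good m zeta"
  have "nat ((hh m l * (- 1 - int (k ! l) - int (k' ! l))) mod int (m ! l)) < m ! l" if "l < length m" for l
    using good_pos[OF g that] by (simp add: nat_less_iff)
  then show ?thesis by (auto simp: GA_def j0_def)
qed

lemma negm1_j0:
  assumes g: "good m zeta" and j: "j \<in> GA m" and k: "k \<in> GA m" and k': "k' \<in> GA m"
  shows "(gadd m j k' = negm1 m (gadd m j k)) \<longleftrightarrow> j = j0 m k k'"
proof -
  have "(gadd m j k' = negm1 m (gadd m j k)) \<longleftrightarrow> (\<forall>l<length m. gadd m j k' ! l = negm1 m (gadd m j k) ! l)"
    by (simp add: list_eq_iff_nth_eq)
  also have "\<dots> \<longleftrightarrow> (\<forall>l<length m. j ! l = j0 m k k' ! l)"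
  proof (intro all_cong1 imp_cong refl)
    fix l assume l: "l < length m"
    have "negm1 m (gadd m j k) ! l = m ! l - 1 - gadd m j k ! l"
      using negm1_nth[OF gadd_GA[OF good_pos'[OF g]] l] .
    moreover have "j ! l < m ! l" using j l by (auto simp: GA_def)
    ultimately show "(gadd m j k' ! l = negm1 m (gadd m j k) ! l) = (j ! l = j0 m k k' ! l)"
      using comp_iff[OF good_odd[OF g l], of "j ! l" "k' ! l" "k ! l"] l
      by (simp add: gadd_nth j0_def hh_def)
  qed
  also have "\<dots> \<longleftrightarrow> j = j0 m k k'"
    using j j0_GA[OF g, of k k'] unfolding GA_def by (auto simp: list_eq_iff_nth_eq)
  finally show ?thesis .
qed

lemma cnj_phi: "cnj (phi_vec m i x) = phi_vec m i x"
  by (simp add: phi_vec_def)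

lemma gadd_cancel:
  assumes g: "good m zeta" and k: "k \<in> GA m" and k': "k' \<in> GA m"
  shows "(gadd m j k = gadd m j k') \<longleftrightarrow> k = k'"
proof
  assume e: "gadd m j k = gadd m j k'"
  have "k ! l = k' ! l" if l: "l < length m" for l
  proof -
    have "(j ! l + k ! l) mod m ! l = (j ! l + k' ! l) mod m ! l"
      using arg_cong[OF e, of "\<lambda>x. x ! l"] l by (simp add: gadd_nth)
    moreover have "k ! l < m ! l" "k' ! l < m ! l" using k k' l by (auto simp: GA_def)
    ultimately show ?thesis using add_mod_cancel by blast
  qed
  then show "k = k'" using k k' by (simp add: list_eq_iff_nth_eq GA_def)
qed simp

lemma Dj0:
  assumes g: "good m zeta"
  shows "(\<Prod>l<length m. zeta l powi (int (j0 m k k' ! l) * (int (\<kappa>' ! l) - int (\<kappa> ! l))))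
       = gg m zeta (k, \<kappa>) (k', \<kappa>')"
  unfolding gg_def
proof (simp only: prod.case, rule prod.cong[OF refl])
  fix l assume "l \<in> {..<length m}"
  then have l: "l < length m" by simp
  have z: "zeta l ^ (m ! l) = 1" "0 < m ! l" using g l good_zeta good_pos by auto
  define c where "c = hh m l * (- 1 - int (k ! l) - int (k' ! l))"
  define d where "d = int (\<kappa>' ! l) - int (\<kappa> ! l)"
  have "int (j0 m k k' ! l) = c mod int (m ! l)" using l z by (simp add: j0_def c_def)
  then have "int (j0 m k k' ! l) * d mod int (m ! l) = (c * d) mod int (m ! l)"
    by (simp add: mod_mult_left_eq)
  then have "zeta l powi (int (j0 m k k' ! l) * d) = zeta l powi (c * d)"
    by (rule powi_cong[OF z])
  then show "zeta l powi (int (j0 m k k' ! l) * (int (\<kappa>' ! l) - int (\<kappa> ! l)))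
      = zeta l powi (hh m l * (- 1 - int (k ! l) - int (k' ! l)) * (int (\<kappa>' ! l) - int (\<kappa> ! l)))"
    unfolding c_def d_def .
qed

lemma cip_eval:
  assumes g: "good m zeta" and k: "k \<in> GA m" and \<kappa>: "\<kappa> \<in> GA m" and k': "k' \<in> GA m" and \<kappa>': "\<kappa>' \<in> GA m"
  shows "cip (gs_coords m) (gabor_steiner m zeta (k, \<kappa>)) (gabor_steiner m zeta (k', \<kappa>'))
       = (if (k, \<kappa>) = (k', \<kappa>') then of_nat (prod_list m) else 0) - gg m zeta (k, \<kappa>) (k', \<kappa>')"
proof -
  define D where "D j = (\<Prod>l<length m. zeta l powi (int (j ! l) * (int (\<kappa>' ! l) - int (\<kappa> ! l))))" for j
  have pos: "\<forall>l<length m. 0 < m ! l" using good_pos'[OF g] .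
  have odd: "odd (prod_list m)" using good_odd_prod[OF g] .
  have finI: "finite (Iset m)" using finite_GA Iset_GA finite_subset by blast
  have "cip (gs_coords m) (gabor_steiner m zeta (k, \<kappa>)) (gabor_steiner m zeta (k', \<kappa>'))
      = (\<Sum>i\<in>Iset m. \<Sum>j\<in>GA m. cnj (gabor_steiner m zeta (k, \<kappa>) (i, j)) * gabor_steiner m zeta (k', \<kappa>') (i, j))"
    unfolding cip_def gs_coords_def by (simp add: sum.cartesian_product)
  also have "\<dots> = (\<Sum>j\<in>GA m. \<Sum>i\<in>Iset m. cnj (gabor_steiner m zeta (k, \<kappa>) (i, j)) * gabor_steiner m zeta (k', \<kappa>') (i, j))"
    by (rule sum.swap)
  also have "\<dots> = (\<Sum>j\<in>GA m. D j * (\<Sum>i\<in>Iset m. phi_vec m i (gadd m j k) * phi_vec m i (gadd m j k')))"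
  proof (rule sum.cong[OF refl])
    fix j assume j: "j \<in> GA m"
    have "cnj (gabor_steiner m zeta (k, \<kappa>) (i, j)) * gabor_steiner m zeta (k', \<kappa>') (i, j)
        = D j * (phi_vec m i (gadd m j k) * phi_vec m i (gadd m j k'))" for i
    proof -
      have "cnj (gabor_steiner m zeta (k, \<kappa>) (i, j)) * gabor_steiner m zeta (k', \<kappa>') (i, j)
          = (cnj (chi m zeta \<kappa> j) * chi m zeta \<kappa>' j) * (phi_vec m i (gadd m j k) * phi_vec m i (gadd m j k'))"
        using gs_eval[OF pos j] by (simp add: cnj_phi algebra_simps)
      then show ?thesis using cnj_chi[OF g j] by (simp add: D_def)
    qed
    then show "(\<Sum>i\<in>Iset m. cnj (gabor_steiner m zeta (k, \<kappa>) (i, j)) * gabor_steiner m zeta (k', \<kappa>') (i, j))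
        = D j * (\<Sum>i\<in>Iset m. phi_vec m i (gadd m j k) * phi_vec m i (gadd m j k'))"
      by (simp add: sum_distrib_left)
  qed
  also have "\<dots> = (\<Sum>j\<in>GA m. D j * ((if k = k' then 1 else 0) - (if j = j0 m k k' then 1 else 0)))"
  proof (rule sum.cong[OF refl])
    fix j assume j: "j \<in> GA m"
    have "(\<Sum>i\<in>Iset m. phi_vec m i (gadd m j k) * phi_vec m i (gadd m j k'))
       = (if gadd m j k = gadd m j k' then 1 else 0) - (if gadd m j k' = negm1 m (gadd m j k) then 1 else 0)"
      using phi_sum[OF odd gadd_GA[OF pos] gadd_GA[OF pos]] .
    also have "\<dots> = (if k = k' then 1 else 0) - (if j = j0 m k k' then 1 else 0)"
      using gadd_cancel[OF g k k'] negm1_j0[OF g j k k'] by simp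
    finally show "D j * (\<Sum>i\<in>Iset m. phi_vec m i (gadd m j k) * phi_vec m i (gadd m j k'))
        = D j * ((if k = k' then 1 else 0) - (if j = j0 m k k' then 1 else 0))" by simp
  qed
  also have "\<dots> = (\<Sum>j\<in>GA m. D j * (if k = k' then 1 else 0)) - (\<Sum>j\<in>GA m. D j * (if j = j0 m k k' then 1 else 0))"
    by (simp only: right_diff_distrib sum_subtractf)
  finally have eq: "cip (gs_coords m) (gabor_steiner m zeta (k, \<kappa>)) (gabor_steiner m zeta (k', \<kappa>'))
     = (\<Sum>j\<in>GA m. D j * (if k = k' then 1 else 0)) - (\<Sum>j\<in>GA m. D j * (if j = j0 m k k' then 1 else 0))" .
  have s1: "(\<Sum>j\<in>GA m. D j * (if k = k' then 1 else 0)) = (if k = k' then (\<Sum>j\<in>GA m. D j) else 0)"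
    by (cases "k = k'") simp_all
  have s2: "(\<Sum>j\<in>GA m. D j * (if j = j0 m k k' then 1 else 0)) = D (j0 m k k')"
    using j0_GA[OF g] finite_GA by (subst sum_single[where a="j0 m k k'"]) auto
  have s3: "D (j0 m k k') = gg m zeta (k, \<kappa>) (k', \<kappa>')"
    unfolding D_def by (rule Dj0[OF g])
  have s4: "(\<Sum>j\<in>GA m. D j) = (if \<kappa> = \<kappa>' then of_nat (prod_list m) else 0)"
    unfolding D_def by (rule char_sum[OF g \<kappa> \<kappa>'])
  show ?thesis unfolding eq s1 s2 s3 s4 by simp
qed


lemma unimod_cnj: "norm (z::complex) = 1 \<Longrightarrow> cnj z * z = 1"
  using complex_norm_square[of z] by (simp add: mult.commute)

definition ee :: "nat list \<Rightarrow> (nat \<Rightarrow> complex) \<Rightarrow> nat list \<times> nat list \<Rightarrow> complex" where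
  "ee m zeta x = (case x of (k, \<kappa>) \<Rightarrow>
     \<Prod>l<length m. zeta l powi (hh m l * int (\<kappa> ! l) * (- 1 - int (k ! l))))"

lemma norm_prod_powi:
  assumes g: "good m zeta"
  shows "norm (\<Prod>l<length m. zeta l powi (f l)) = 1"
proof -
  have "norm (\<Prod>l<length m. zeta l powi (f l)) = (\<Prod>l<length m. norm (zeta l powi (f l)))"
    by (simp add: prod_norm)
  also have "\<dots> = 1"
    using g by (intro prod.neutral ballI powi_norm) (auto simp: good_def)
  finally show ?thesis .
qed

lemma cnj_prod_powi:
  assumes g: "good m zeta"
  shows "cnj (\<Prod>l<length m. zeta l powi (f l)) = (\<Prod>l<length m. zeta l powi (- f l))"
  unfolding cnj_prod using g by (intro prod.cong refl powi_cnj) (auto simp: good_def)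

lemma mult_prod_powi:
  assumes g: "good m zeta"
  shows "(\<Prod>l<length m. zeta l powi (f l)) * (\<Prod>l<length m. zeta l powi (f' l))
       = (\<Prod>l<length m. zeta l powi (f l + f' l))"
  unfolding prod.distrib[symmetric]
proof (rule prod.cong[OF refl])
  fix l assume "l \<in> {..<length m}"
  then have z: "zeta l ^ (m ! l) = 1" "0 < m ! l" using g by (auto simp: good_def)
  then have "zeta l \<noteq> 0" by (rule zeta_nz)
  then show "zeta l powi f l * zeta l powi f' l = zeta l powi (f l + f' l)"
    by (rule power_int_add[OF disjI1, symmetric])
qed

lemma prod_powi_cong:
  "(\<And>l. l < length m \<Longrightarrow> f l = f' l) \<Longrightarrow>
   (\<Prod>l<length m. zeta l powi (f l)) = (\<Prod>l<length m. zeta l powi (f' l))"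
  by (intro prod.cong refl) auto

lemma ga_zero_nth: "l < length m \<Longrightarrow> ga_zero m ! l = 0"
  by (simp add: ga_zero_def)

lemma ga_zero_GA: "good m zeta \<Longrightarrow> ga_zero m \<in> GA m"
  by (auto simp: GA_def ga_zero_def good_def)

lemma gg_diag: "gg m zeta x x = 1"
  by (cases x) (simp add: gg_def)

lemma gg_x0: "gg m zeta (ga_zero m, ga_zero m) y = ee m zeta y"
  unfolding gg_def ee_def
  by (cases y) (auto intro!: prod_powi_cong simp: ga_zero_nth algebra_simps)

lemma ee_cnj: assumes g: "good m zeta"
  shows "cnj (ee m zeta (k, \<kappa>)) = (\<Prod>l<length m. zeta l powi (- (hh m l * int (\<kappa> ! l) * (- 1 - int (k ! l)))))"
  unfolding ee_def prod.case by (rule cnj_prod_powi[OF g])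

lemma gg_to_x0: assumes g: "good m zeta"
  shows "gg m zeta (k, \<kappa>) (ga_zero m, ga_zero m) = cnj (ee m zeta (k, \<kappa>))"
  unfolding ee_cnj[OF g] unfolding gg_def prod.case
  by (rule prod_powi_cong) (simp add: ga_zero_nth algebra_simps)

lemma Sbar_generic:
  assumes g: "good m zeta"
  shows "ee m zeta (k, \<kappa>) * cnj (ee m zeta (kt, \<kappa>t)) * gg m zeta (k, \<kappa>) (kt, \<kappa>t)
       = (\<Prod>l<length m. zeta l ^ nat ((int ((m ! l + 1) div 2) *
                 (int (\<kappa> ! l) * int (kt ! l) - int (\<kappa>t ! l) * int (k ! l))) mod int (m ! l)))"
proof -
  have "ee m zeta (k, \<kappa>) * cnj (ee m zeta (kt, \<kappa>t)) * gg m zeta (k, \<kappa>) (kt, \<kappa>t)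
     = (\<Prod>l<length m. zeta l powi (hh m l * int (\<kappa> ! l) * (- 1 - int (k ! l))
          + - (hh m l * int (\<kappa>t ! l) * (- 1 - int (kt ! l)))
          + hh m l * (- 1 - int (k ! l) - int (kt ! l)) * (int (\<kappa>t ! l) - int (\<kappa> ! l))))"
    unfolding ee_cnj[OF g] unfolding ee_def gg_def prod.case mult_prod_powi[OF g] ..
  also have "\<dots> = (\<Prod>l<length m. zeta l powi (hh m l * (int (\<kappa> ! l) * int (kt ! l) - int (\<kappa>t ! l) * int (k ! l))))"
    by (intro prod_powi_cong) (simp add: algebra_simps)
  also have "\<dots> = (\<Prod>l<length m. zeta l ^ nat ((int ((m ! l + 1) div 2) *
                 (int (\<kappa> ! l) * int (kt ! l) - int (\<kappa>t ! l) * int (k ! l))) mod int (m ! l)))"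
  proof (rule prod.cong[OF refl])
    fix l assume "l \<in> {..<length m}"
    then have z: "zeta l ^ (m ! l) = 1" "0 < m ! l" using g by (auto simp: good_def)
    show "zeta l powi (hh m l * (int (\<kappa> ! l) * int (kt ! l) - int (\<kappa>t ! l) * int (k ! l)))
        = zeta l ^ nat ((int ((m ! l + 1) div 2) *
                 (int (\<kappa> ! l) * int (kt ! l) - int (\<kappa>t ! l) * int (k ! l))) mod int (m ! l))"
      unfolding pow_nat_mod[OF z] hh_def ..
  qed
  finally show ?thesis .
qed


theorem mainTheorem3:
  fixes m :: "nat list" and zeta :: "nat \<Rightarrow> complex"
  assumes "m \<noteq> []"
    and "\<forall>l<length m. odd (m ! l) \<and> m ! l \<ge> 3"
    and "\<forall>l<length m. zeta l ^ (m ! l) = 1 \<and> (\<forall>d. 0 < d \<and> d < m ! l \<longrightarrow> zeta l ^ d \<noteq> 1)"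
  shows "is_normalized_signature_matrix (gs_coords m) (GA m \<times> GA m) (ga_zero m, ga_zero m)
           (gabor_steiner m zeta) (Sbar m zeta)"
proof -
  have g: "good m zeta" using assms(2,3) by (simp add: good_def)
  define N where "N = prod_list m"
  have N1: "N \<ge> 1" using good_odd_prod[OF g] unfolding N_def by (cases "prod_list m") auto
  define x0 where "x0 = (ga_zero m, ga_zero m)"
  define c where "c x = (if x = x0 then 1 else - cnj (ee m zeta x))" for x
  define Phi where "Phi x y = c x * gabor_steiner m zeta x y" for x y
  have normee: "norm (ee m zeta x) = 1" for x
    by (cases x) (simp add: ee_def norm_prod_powi[OF g])
  have normc: "norm (c x) = 1" for x
    using normee[of x] by (simp add: c_def)
  have cc: "cnj (c x) * c x = 1" for x using unimod_cnj[OF normc] .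
  have ce: "cnj (ee m zeta x) * ee m zeta x = 1" for x using unimod_cnj[OF normee] .
  have cipc: "cip Y (Phi x) (Phi y) = cnj (c x) * c y * cip Y (gabor_steiner m zeta x) (gabor_steiner m zeta y)"
    for Y x y unfolding cip_def Phi_def by (simp add: sum_distrib_left algebra_simps)
  have G: "cip (gs_coords m) (gabor_steiner m zeta x) (gabor_steiner m zeta y)
      = (if x = y then of_nat N else 0) - gg m zeta x y"
    if xG: "x \<in> GA m \<times> GA m" and yG: "y \<in> GA m \<times> GA m" for x y
  proof -
    obtain k \<kappa> where xk: "x = (k, \<kappa>)" "k \<in> GA m" "\<kappa> \<in> GA m" using xG by auto
    obtain k' \<kappa>' where yk: "y = (k', \<kappa>')" "k' \<in> GA m" "\<kappa>' \<in> GA m" using yG by auto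
    show ?thesis using cip_eval[OF g xk(2,3) yk(2,3)] unfolding N_def xk(1) yk(1) by simp
  qed
  define \<nu> where "\<nu> = sqrt (real N - 1)"
  have nu2: "complex_of_real (\<nu>\<^sup>2) = of_nat N - 1" using N1 by (simp add: \<nu>_def of_nat_diff)
  have x0G: "x0 \<in> GA m \<times> GA m" using ga_zero_GA[OF g] by (simp add: x0_def)
  have main: "Sbar m zeta x y = cip (gs_coords m) (Phi x) (Phi y) - (if x = y then complex_of_real (\<nu>\<^sup>2) else 0)"
    if x: "x \<in> GA m \<times> GA m" and y: "y \<in> GA m \<times> GA m" for x y
  proof (cases "x = y")
    case True
    then show ?thesis using x cipc G[OF x x] cc[of x] nu2 gg_diag[of m zeta x]
      by (simp add: Sbar_def)
  next
    case False
    then have cip: "cip (gs_coords m) (Phi x) (Phi y) = - (cnj (c x) * c y * gg m zeta x y)"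
      using cipc G[OF x y] by simp
    show ?thesis
    proof (cases "x = x0")
      case True
      then have "y \<noteq> x0" using False by simp
      then have "cip (gs_coords m) (Phi x) (Phi y) = 1"
        using cip True gg_x0[of m zeta y] ce[of y] by (simp add: c_def x0_def)
      then show ?thesis using False True by (simp add: Sbar_def x0_def)
    next
      case xn: False
      show ?thesis
      proof (cases "y = x0")
        case True
        obtain k \<kappa> where xk: "x = (k, \<kappa>)" by (cases x)
        have "cip (gs_coords m) (Phi x) (Phi y) = ee m zeta x * cnj (ee m zeta x)"
        proof -
          have "c x = - cnj (ee m zeta x)" "c y = 1" using xn True by (simp_all add: c_def)
          then show ?thesis using cip True gg_to_x0[OF g, of k \<kappa>] xk by (simp add: x0_def)
        qed
        also have "\<dots> = 1" using ce[of x] by (simp add: mult.commute)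
        finally show ?thesis using False True xn by (simp add: Sbar_def x0_def)
      next
        case yn: False
        obtain k \<kappa> where xk: "x = (k, \<kappa>)" by (cases x)
        obtain kt \<kappa>t where yk: "y = (kt, \<kappa>t)" by (cases y)
        have "cip (gs_coords m) (Phi x) (Phi y) = - (ee m zeta x * cnj (ee m zeta y) * gg m zeta x y)"
          using cip xn yn by (simp add: c_def)
        moreover have "Sbar m zeta x y = - (\<Prod>l<length m. zeta l ^ nat ((int ((m ! l + 1) div 2) *
                 (int (\<kappa> ! l) * int (kt ! l) - int (\<kappa>t ! l) * int (k ! l))) mod int (m ! l)))"
          using False xn yn unfolding Sbar_def x0_def[symmetric] Let_def xk yk by simp
        ultimately show ?thesis using False Sbar_generic[OF g, of k \<kappa> kt \<kappa>t] xk yk by auto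
      qed
    qed
  qed
  have sig: "is_signature_matrix (gs_coords m) (GA m \<times> GA m) Phi (Sbar m zeta)"
    unfolding is_signature_matrix_def
  proof (rule exI[of _ \<nu>], rule exI[of _ "1::real"], intro conjI ballI impI)
    show "0 \<le> \<nu>" using N1 by (simp add: \<nu>_def)
    show "(0::real) < 1" by simp
    fix x assume x: "x \<in> GA m \<times> GA m"
    show "cip (gs_coords m) (Phi x) (Phi x) = complex_of_real (\<nu>\<^sup>2)"
      using cipc G[OF x x] cc[of x] nu2 gg_diag[of m zeta x] by simp
  next
    fix x y assume x: "x \<in> GA m \<times> GA m" and y: "y \<in> GA m \<times> GA m" and ne: "x \<noteq> y"
    have "norm (cip (gs_coords m) (Phi x) (Phi y)) = norm (cnj (c x) * c y * gg m zeta x y)"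
      using cipc G[OF x y] ne by (simp add: norm_minus_cancel)
    also have "\<dots> = 1" using normc[of x] normc[of y]
      by (cases x; cases y) (simp add: norm_mult gg_def norm_prod_powi[OF g])
    finally show "norm (cip (gs_coords m) (Phi x) (Phi y)) = 1" .
  next
    fix x y assume x: "x \<in> GA m \<times> GA m" and y: "y \<in> GA m \<times> GA m"
    show "Sbar m zeta x y = (cip (gs_coords m) (Phi x) (Phi y) - (if x = y then complex_of_real (\<nu>\<^sup>2) else 0)) / complex_of_real 1"
      using main[OF x y] by simp
  qed
  show ?thesis
    unfolding is_normalized_signature_matrix_def
  proof (intro exI[of _ c] conjI ballI impI)
    show "norm (c x) = 1" for x using normc .
    show "is_signature_matrix (gs_coords m) (GA m \<times> GA m) (\<lambda>x y. c x * gabor_steiner m zeta x y) (Sbar m zeta)"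
      using sig unfolding Phi_def .
    fix x assume "x \<in> GA m \<times> GA m" "x \<noteq> (ga_zero m, ga_zero m)"
    then show "Sbar m zeta (ga_zero m, ga_zero m) x = 1" "Sbar m zeta x (ga_zero m, ga_zero m) = 1"
      by (auto simp: Sbar_def)
  qed
qed

end
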